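(* Let $t>0$ with $1/t$ a positive integer, let $n\ge 2t+\frac{9}{2t}+\frac92$, and let $s\ge 2$ be an integer such that $s/t$ is an integer and $n\ge s+\frac{s}{t}+1$. Then $$\lambda_1\big(D(K_1\vee(K_{n-1-\frac1t}+\tfrac1tK_1))\big)<\lambda_1\big(D(K_s\vee(K_{n-s-\frac st}+\tfrac stK_1))\big).$$
   Context: For a connected graph $G$, $D(G)$ is the distance matrix and $\lambda_1(D(G))$ its largest eigenvalue. $K_m$ is the complete graph, $+$ is disjoint union, $kK_1$ is $k$ isolated vertices, $\vee$ is the join (disjoint union plus all edges between the two parts). *)

theory Defs
  imports "Jordan_Normal_Form.Char_Poly"
begin

text \<open>Simple graphs on the vertex set {0..<N}, given by a symmetric irreflexive
adjacency predicate.\<close>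

definition is_walk :: "(nat \<Rightarrow> nat \<Rightarrow> bool) \<Rightarrow> nat list \<Rightarrow> bool" where
  "is_walk E xs = (xs \<noteq> [] \<and> (\<forall>i. i + 1 < length xs \<longrightarrow> E (xs ! i) (xs ! (i + 1))))"

definition gdist :: "(nat \<Rightarrow> nat \<Rightarrow> bool) \<Rightarrow> nat \<Rightarrow> nat \<Rightarrow> nat" where
  "gdist E u v = (LEAST d. \<exists>xs. is_walk E xs \<and> hd xs = u \<and> last xs = v \<and> length xs = d + 1)"

definition dist_matrix :: "nat \<Rightarrow> (nat \<Rightarrow> nat \<Rightarrow> bool) \<Rightarrow> real mat" where
  "dist_matrix N E = mat N N (\<lambda>(i, j). real (gdist E i j))"

definition lambda1 :: "real mat \<Rightarrow> real" where
  "lambda1 A = Max {x. eigenvalue A x}"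

text \<open>The graph K_s \<or> (K_m + k K_1) on vertices {0..<s+m+k}: vertices 0..<s form K_s,
vertices s..<s+m form K_m, vertices s+m..<s+m+k are the k isolated vertices of the
disjoint union; the join adds all edges between the first s vertices and the rest.\<close>
definition join_graph :: "nat \<Rightarrow> nat \<Rightarrow> nat \<Rightarrow> nat \<Rightarrow> nat \<Rightarrow> bool" where
  "join_graph s m k u v =
     (u < s + m + k \<and> v < s + m + k \<and> u \<noteq> v \<and>
      (u < s \<or> v < s \<or> (u < s + m \<and> v < s + m)))"

definition D_join :: "nat \<Rightarrow> nat \<Rightarrow> nat \<Rightarrow> real mat" where
  "D_join s m k = dist_matrix (s + m + k) (join_graph s m k)"

end

theory Submission
  imports Defs
begin

definition dd :: "nat \<Rightarrow> nat \<Rightarrow> nat \<Rightarrow> nat \<Rightarrow> nat \<Rightarrow> nat" where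
  "dd s m k i j = (if i = j then 0 else if i < s \<or> j < s \<or> (i < s + m \<and> j < s + m) then 1 else 2)"

lemma walk_len1: "is_walk E xs \<Longrightarrow> length xs = 1 \<Longrightarrow> hd xs = last xs"
  by (cases xs) auto

lemma walk_len2: "is_walk E xs \<Longrightarrow> length xs = 2 \<Longrightarrow> E (hd xs) (last xs)"
  unfolding is_walk_def
  apply (cases xs; simp)
  subgoal for a ys by (cases ys; simp; fastforce)
  done

lemma gdist_join:
  assumes "s \<ge> 1" "i < s + m + k" "j < s + m + k"
  shows "gdist (join_graph s m k) i j = dd s m k i j"
proof -
  let ?E = "join_graph s m k"
  let ?P = "\<lambda>d. \<exists>xs. is_walk ?E xs \<and> hd xs = i \<and> last xs = j \<and> length xs = d + 1"
  show ?thesis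
  proof (cases "i = j")
    case True
    have "?P 0" by (rule exI[of _ "[i]"]) (auto simp: is_walk_def True)
    then show ?thesis unfolding gdist_def dd_def using True by (simp add: Least_eq_0)
  next
    case ne: False
    have no0: "\<not> ?P 0" using ne walk_len1 by fastforce
    show ?thesis
    proof (cases "?E i j")
      case True
      have p1: "?P 1" by (rule exI[of _ "[i,j]"]) (auto simp: is_walk_def True nth_Cons')
      have "(LEAST d. ?P d) = 1"
        by (rule Least_equality[where P="?P", OF p1]) (use no0 in \<open>auto simp: not_less_eq_eq[symmetric]\<close>)
      moreover have "dd s m k i j = 1" using True ne unfolding dd_def join_graph_def by auto
      ultimately show ?thesis unfolding gdist_def by simp
    next
      case False
      have no1: "\<not> ?P 1" using False walk_len2 by fastforce
      have e1: "?E i 0" "?E 0 j" using assms ne False unfolding join_graph_def by auto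
      have p2: "?P 2" by (rule exI[of _ "[i,0,j]"]) (auto simp: is_walk_def e1 nth_Cons')
      have "(LEAST d. ?P d) = 2"
      proof (rule Least_equality[where P="?P", OF p2])
        fix y assume "?P y"
        with no0 no1 show "2 \<le> y" by (cases y; cases "y - 1"; auto)
      qed
      moreover have "dd s m k i j = 2" using False ne assms unfolding dd_def join_graph_def by auto
      ultimately show ?thesis unfolding gdist_def by simp
    qed
  qed
qed

lemma D_join_eq:
  assumes "s \<ge> 1"
  shows "D_join s m k = mat (s+m+k) (s+m+k) (\<lambda>(i,j). real (dd s m k i j))"
  unfolding D_join_def dist_matrix_def
  by (rule eq_matI) (auto simp: gdist_join[OF assms])



lemma sum_except:
  assumes "finite A" "\<And>j. j \<in> A \<Longrightarrow> j \<noteq> i \<Longrightarrow> g j = C" "i \<in> A \<Longrightarrow> g i = (0::real)"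
  shows "sum g A = C * real (card A) - (if i \<in> A then C else 0)"
proof (cases "i \<in> A")
  case True
  have "sum g A = g i + sum g (A - {i})" using True assms(1) by (simp add: sum.remove)
  also have "sum g (A - {i}) = sum (\<lambda>_. C) (A - {i})" using assms(2) by (intro sum.cong) auto
  finally show ?thesis using True assms by (simp add: card_Diff_singleton_if of_nat_diff card_gt_0_iff[symmetric]; cases "card A"; auto simp: algebra_simps)
next
  case False
  have "sum g A = sum (\<lambda>_. C) A" using assms(2) False by (intro sum.cong) auto
  then show ?thesis using False by simp
qed

definition cv :: "nat \<Rightarrow> nat \<Rightarrow> real \<Rightarrow> real \<Rightarrow> real \<Rightarrow> nat \<Rightarrow> real" where
  "cv s m a b c i = (if i < s then a else if i < s + m then b else c)"

definition rowv :: "nat \<Rightarrow> nat \<Rightarrow> nat \<Rightarrow> real \<Rightarrow> real \<Rightarrow> real \<Rightarrow> nat \<Rightarrow> real" where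
  "rowv s m k a b c i = (if i < s then (real s - 1) * a + real m * b + real k * c
     else if i < s + m then real s * a + (real m - 1) * b + 2 * real k * c
     else real s * a + 2 * real m * b + 2 * (real k - 1) * c)"

lemma row_sum:
  assumes i: "i < s + m + k"
  shows "(\<Sum>j\<in>{0..<s+m+k}. real (dd s m k i j) * cv s m a b c j) = rowv s m k a b c i"
proof -
  let ?g = "\<lambda>j. real (dd s m k i j) * cv s m a b c j"
  have split: "sum ?g {0..<s+m+k} = sum ?g {0..<s} + sum ?g {s..<s+m} + sum ?g {s+m..<s+m+k}"
    by (simp add: sum.atLeastLessThan_concat)
  have dii: "?g i = 0" by (simp add: dd_def)
  show ?thesis
  proof (cases "i < s")
    case True
    have "sum ?g {0..<s} = a * real s - a"
      by (subst sum_except[where C=a and i=i]) (use True dii in \<open>auto simp: dd_def cv_def\<close>)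
    moreover have "sum ?g {s..<s+m} = b * real m"
      by (subst sum_except[where C=b and i=i]) (use True in \<open>auto simp: dd_def cv_def\<close>)
    moreover have "sum ?g {s+m..<s+m+k} = c * real k"
      by (subst sum_except[where C=c and i=i]) (use True in \<open>auto simp: dd_def cv_def\<close>)
    ultimately show ?thesis using True split by (simp add: rowv_def algebra_simps)
  next
    case F1: False
    show ?thesis
    proof (cases "i < s + m")
      case True
      have "sum ?g {0..<s} = a * real s"
        by (subst sum_except[where C=a and i=i]) (use True F1 in \<open>auto simp: dd_def cv_def\<close>)
      moreover have "sum ?g {s..<s+m} = b * real m - b"
        by (subst sum_except[where C=b and i=i]) (use True F1 dii in \<open>auto simp: dd_def cv_def\<close>)
      moreover have "sum ?g {s+m..<s+m+k} = 2 * c * real k"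
        by (subst sum_except[where C="2*c" and i=i]) (use True F1 in \<open>auto simp: dd_def cv_def\<close>)
      ultimately show ?thesis using True F1 split by (simp add: rowv_def algebra_simps)
    next
      case False
      have "sum ?g {0..<s} = a * real s"
        by (subst sum_except[where C=a and i=i]) (use False F1 in \<open>auto simp: dd_def cv_def\<close>)
      moreover have "sum ?g {s..<s+m} = 2 * b * real m"
        by (subst sum_except[where C="2*b" and i=i]) (use False F1 in \<open>auto simp: dd_def cv_def\<close>)
      moreover have "sum ?g {s+m..<s+m+k} = 2 * c * real k - 2 * c"
        by (subst sum_except[where C="2*c" and i=i]) (use False F1 i dii in \<open>auto simp: dd_def cv_def\<close>)
      ultimately show ?thesis using False F1 split by (simp add: rowv_def algebra_simps)
    qed
  qed
qed

lemma D_mult: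
  assumes "s \<ge> 1" "i < s + m + k"
  shows "(D_join s m k *\<^sub>v vec (s+m+k) (cv s m a b c)) $ i = rowv s m k a b c i"
  using assms row_sum[OF assms(2)]
  by (simp add: D_join_eq scalar_prod_def)



definition fx :: "nat \<Rightarrow> nat \<Rightarrow> nat \<Rightarrow> real \<Rightarrow> real" where
  "fx s m k x = x * (x + 1 - 2 * real k) * (x - real s - real m) - real k * ((real s + 4 * real m) * x - real m * real s)"

lemma eig_from_root:
  assumes s: "s \<ge> 1" and k: "k \<ge> 1" and m: "m \<ge> 1" and r: "fx s m k (l + 1) = 0"
  shows "eigenvalue (D_join s m k) l"
proof -
  define x where "x = l + 1"
  define a where "a = real k * (x + real m)"
  define b where "b = real k * (2 * x - real s)"
  define c where "c = x * (x - real s - real m)"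
  let ?N = "s + m + k"
  let ?v = "vec ?N (cv s m a b c)"
  have D: "D_join s m k \<in> carrier_mat ?N ?N" using s by (simp add: D_join_eq)
  have rw: "rowv s m k a b c i = l * cv s m a b c i" for i
  proof -
    have e1: "(real s - 1) * a + real m * b + real k * c = l * a"
      unfolding a_def b_def c_def x_def by (simp add: algebra_simps)
    have e2: "real s * a + (real m - 1) * b + 2 * real k * c = l * b"
      unfolding a_def b_def c_def x_def by (simp add: algebra_simps)
    have e3: "real s * a + 2 * real m * b + 2 * (real k - 1) * c = l * c"
      using r unfolding a_def b_def c_def x_def fx_def by (simp add: algebra_simps)
    show ?thesis unfolding rowv_def cv_def using e1 e2 e3 by auto
  qed
  have eq: "D_join s m k *\<^sub>v ?v = l \<cdot>\<^sub>v ?v"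
  proof (rule eq_vecI)
    fix i assume "i < dim_vec (l \<cdot>\<^sub>v ?v)"
    then have i: "i < ?N" by simp
    show "(D_join s m k *\<^sub>v ?v) $ i = (l \<cdot>\<^sub>v ?v) $ i"
      using D_mult[OF s i, of a b c] rw[of i] i by simp
  qed (use D in simp)
  have nz: "?v \<noteq> 0\<^sub>v ?N"
  proof
    assume z: "?v = 0\<^sub>v ?N"
    have "?v $ 0 = 0" "?v $ s = 0" using z s m k by auto
    then have "a = 0" "b = 0" using s m by (auto simp: cv_def)
    then have "x + real m = 0" "2 * x - real s = 0" using k unfolding a_def b_def by auto
    then show False using m by linarith
  qed
  show ?thesis unfolding eigenvalue_def eigenvector_def
    by (rule exI[of _ ?v]) (use D eq nz in auto)
qed



lemma eig_finite:
  assumes A: "(A :: real mat) \<in> carrier_mat N N"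
  shows "finite {x. eigenvalue A x}"
proof -
  have "char_poly A \<noteq> 0" using degree_monic_char_poly[OF A] by auto
  then have "finite {x. poly (char_poly A) x = 0}" by (rule poly_roots_finite)
  then show ?thesis using eigenvalue_root_char_poly[OF A] by simp
qed

lemma lambda1_ge:
  assumes A: "(A :: real mat) \<in> carrier_mat N N" and "eigenvalue A y"
  shows "y \<le> lambda1 A"
  unfolding lambda1_def using eig_finite[OF A] assms(2) by (intro Max_ge) auto

lemma lambda1_le:
  assumes A: "(A :: real mat) \<in> carrier_mat N N" and "eigenvalue A y" and "\<And>x. eigenvalue A x \<Longrightarrow> x \<le> U"
  shows "lambda1 A \<le> U"
  unfolding lambda1_def using eig_finite[OF A] assms(2,3) by (subst Max_le_iff) auto

lemma collatz:
  assumes A: "(A :: real mat) \<in> carrier_mat N N"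
    and nn: "\<And>i j. i < N \<Longrightarrow> j < N \<Longrightarrow> A $$ (i,j) \<ge> 0"
    and w: "w \<in> carrier_vec N" and wp: "\<And>i. i < N \<Longrightarrow> w $ i > 0"
    and Aw: "\<And>i. i < N \<Longrightarrow> (A *\<^sub>v w) $ i \<le> U * w $ i"
    and ev: "eigenvalue A x"
  shows "x \<le> U"
proof -
  obtain v where v: "v \<in> carrier_vec N" "v \<noteq> 0\<^sub>v N" "A *\<^sub>v v = x \<cdot>\<^sub>v v"
    using ev A unfolding eigenvalue_def eigenvector_def by auto
  obtain j where j: "j < N" "v $ j \<noteq> 0"
  proof (rule ccontr)
    assume "\<not> ?thesis"
    then have "\<And>j. j < N \<Longrightarrow> v $ j = 0" using that by blast
    then have "v = 0\<^sub>v N" using v(1) by (intro eq_vecI) auto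
    then show False using v(2) by simp
  qed
  define r where "r i = \<bar>v $ i\<bar> / w $ i" for i
  define c where "c = Max (r ` {0..<N})"
  obtain i0 where i0: "i0 < N" "r i0 = c"
  proof -
    have "c \<in> r ` {0..<N}" unfolding c_def using j(1) by (intro Max_in) auto
    then show ?thesis using that by auto
  qed
  have rle: "r i \<le> c" if "i < N" for i unfolding c_def using that by (intro Max_ge) auto
  have bound: "\<bar>v $ i\<bar> \<le> c * w $ i" if "i < N" for i
    using rle[OF that] wp[OF that] unfolding r_def by (simp add: divide_le_eq)
  have "r j > 0" using j wp[OF j(1)] unfolding r_def by simp
  then have cpos: "c > 0" using rle[OF j(1)] by linarith
  have vi0: "\<bar>v $ i0\<bar> = c * w $ i0" using i0 wp[OF i0(1)] unfolding r_def by (simp add: field_simps)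
  have vi0pos: "\<bar>v $ i0\<bar> > 0" using vi0 cpos wp[OF i0(1)] by simp
  have "\<bar>x\<bar> * \<bar>v $ i0\<bar> = \<bar>(A *\<^sub>v v) $ i0\<bar>" using v(1,3) i0 by (simp add: abs_mult)
  also have "(A *\<^sub>v v) $ i0 = (\<Sum>j\<in>{0..<N}. A $$ (i0,j) * v $ j)"
    using A v(1) i0 by (simp add: scalar_prod_def)
  also have "\<bar>\<dots>\<bar> \<le> (\<Sum>j\<in>{0..<N}. A $$ (i0,j) * (c * w $ j))"
  proof -
    have "\<bar>\<Sum>j\<in>{0..<N}. A $$ (i0,j) * v $ j\<bar> \<le> (\<Sum>j\<in>{0..<N}. \<bar>A $$ (i0,j) * v $ j\<bar>)"
      by (rule sum_abs)
    also have "\<dots> \<le> (\<Sum>j\<in>{0..<N}. A $$ (i0,j) * (c * w $ j))"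
      using nn[OF i0(1)] bound by (intro sum_mono) (auto simp: abs_mult intro: mult_left_mono)
    finally show ?thesis .
  qed
  also have "\<dots> = c * (A *\<^sub>v w) $ i0"
    using A w i0 by (simp add: scalar_prod_def sum_distrib_left algebra_simps)
  also have "\<dots> \<le> c * (U * w $ i0)" using Aw[OF i0(1)] cpos by simp
  also have "\<dots> = U * \<bar>v $ i0\<bar>" using vi0 by simp
  finally have "\<bar>x\<bar> * \<bar>v $ i0\<bar> \<le> U * \<bar>v $ i0\<bar>" .
  then have "\<bar>x\<bar> \<le> U" using vi0pos by simp
  then show ?thesis by simp
qed



lemma rowv_gen:
  assumes "a = real k * (l + 1 + real m)" "b = real k * (2 * (l + 1) - real s)"
    "c = (l + 1) * (l + 1 - real s - real m)"
  shows "rowv s m k a b c i = l * cv s m a b c i - (if i < s + m then 0 else fx s m k (l + 1))"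
proof -
  have e1: "(real s - 1) * a + real m * b + real k * c = l * a"
    unfolding assms by (simp add: algebra_simps)
  have e2: "real s * a + (real m - 1) * b + 2 * real k * c = l * b"
    unfolding assms by (simp add: algebra_simps)
  have e3: "real s * a + 2 * real m * b + 2 * (real k - 1) * c = l * c - fx s m k (l + 1)"
    unfolding assms fx_def by (simp add: algebra_simps)
  show ?thesis unfolding rowv_def cv_def using e1 e2 e3 by auto
qed

lemma fx_cont: "isCont (fx s m k) x"
  unfolding fx_def[abs_def] by (intro continuous_intros)

lemma fx_large:
  assumes "Y = 8 * (real s + real m + real k) + 8"
  shows "fx s m k Y > 0"
proof -
  have Y: "Y > 0" using assms by simp
  have h1: "Y - real s - real m \<ge> Y / 2" using assms by simp
  have h2: "Y + 1 - 2 * real k \<ge> Y / 2" using assms by simp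
  have h3: "real k \<le> Y / 8" using assms by simp
  have h4: "real s + 4 * real m \<le> Y / 2" using assms by simp
  have "Y * (Y / 2) * (Y / 2) \<le> Y * (Y + 1 - 2 * real k) * (Y - real s - real m)"
    using h1 h2 Y by (intro mult_mono) auto
  moreover have "real k * ((real s + 4 * real m) * Y - real m * real s) \<le> (Y / 8) * ((Y / 2) * Y)"
  proof -
    have "real k * ((real s + 4 * real m) * Y - real m * real s) \<le> real k * ((real s + 4 * real m) * Y)"
      by (simp add: mult_left_mono)
    also have "\<dots> \<le> (Y / 8) * ((Y / 2) * Y)"
      using h3 h4 Y by (intro mult_mono) auto
    finally show ?thesis .
  qed
  moreover have "(Y / 8) * ((Y / 2) * Y) < Y * (Y / 2) * (Y / 2)" using Y by (simp add: field_simps)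
  ultimately show ?thesis unfolding fx_def by linarith
qed

lemma D_join_carrier: "s \<ge> 1 \<Longrightarrow> D_join s m k \<in> carrier_mat (s+m+k) (s+m+k)"
  by (simp add: D_join_eq)

lemma D_join_nonneg: "s \<ge> 1 \<Longrightarrow> i < s+m+k \<Longrightarrow> j < s+m+k \<Longrightarrow> D_join s m k $$ (i,j) \<ge> 0"
  by (simp add: D_join_eq)

lemma root_ivt:
  assumes "fx s m k a \<le> 0" "fx s m k b \<ge> 0" "a \<le> b"
  shows "\<exists>x\<ge>a. x \<le> b \<and> fx s m k x = 0"
  using IVT[of "fx s m k" a 0 b] assms fx_cont by auto


definition G :: "real \<Rightarrow> real \<Rightarrow> real \<Rightarrow> real" where
 "G s q d = (let n = s + s*q + 1 + d; m = d + 1; k = s*q; X = n + 3*q in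
    X * (X + 1 - 2*k) * (X - s - m) - k * ((s + 4*m) * X - m * s))"

lemma G2: "G 2 q d = q * (28+55*q+25*q^2+3*d-10*d*q-3*d^2)"
  unfolding G_def Let_def by (simp add: algebra_simps power2_eq_square power3_eq_cube)
lemma G3: "G 3 q d = q * (45+54*q-6*d-36*d*q-6*d^2)"
  unfolding G_def Let_def by (simp add: algebra_simps power2_eq_square power3_eq_cube)
lemma G4: "G 4 q d = q * (66+35*q-49*q^2-19*d-70*d*q-9*d^2)"
  unfolding G_def Let_def by (simp add: algebra_simps power2_eq_square power3_eq_cube)
lemma G5: "G (a+5) (b+1) d = - (b+1) * (45 + 264*b + 128*b^2 + 126*a + 249*a*b + 96*a*b^2
   + 31*a^2 + 51*a^2*b + 18*a^2*b^2 + 2*a^3 + 3*a^3*b + a^3*b^2 + 148*d + 112*d*b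
   + 65*d*a + 46*d*a*b + 6*d*a^2 + 4*d*a^2*b + 12*d^2 + 3*d^2*a)"
  unfolding G_def Let_def by (simp add: algebra_simps power2_eq_square power3_eq_cube)

lemma s2: fixes q d :: real assumes "q = 1 \<or> q \<ge> 2" "d \<ge> 0" "2*q*d \<ge> 4+3*q+5*q^2"
  shows "28+55*q+25*q^2+3*d-10*d*q-3*d^2 < 0"
  using assms(1)
proof
  assume q: "q = 1"
  then have "d \<ge> 6" using assms(3) by simp
  then have "d^2 \<ge> 6*d" by (simp add: power2_eq_square)
  then show ?thesis using q \<open>d \<ge> 6\<close> by simp
next
  assume q: "q \<ge> 2"
  define e where "e = 5/2*q + 3/2"
  have "2*q*d > 2*q*e" using assms(3) q unfolding e_def by (simp add: algebra_simps power2_eq_square)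
  then have de: "d > e" using q by simp
  have "(d - e) * (d + e - 1) \<ge> 0" using de q unfolding e_def by (intro mult_nonneg_nonneg) auto
  then have h1: "d^2 - d \<ge> e^2 - e" by (simp add: algebra_simps power2_eq_square)
  have h2: "q^2 \<ge> 2*q" using q by (simp add: power2_eq_square)
  have h3: "10*d*q \<ge> 5*(4+3*q+5*q^2)" using assms(3) by (simp add: algebra_simps)
  have "e^2 - e = 25/4*q^2 + 5*q + 3/4" unfolding e_def by (simp add: algebra_simps power2_eq_square)
  then have h4: "d^2 - d \<ge> 25/4*q^2 + 5*q + 3/4" using h1 by linarith
  have "28+55*q+25*q^2+3*d-10*d*q-3*d^2 = (8+40*q - 3*(d^2 - d)) + (20+15*q+25*q^2 - 10*d*q)"
    by (simp add: algebra_simps)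
  also have "\<dots> \<le> (8+40*q - 3*(25/4*q^2 + 5*q + 3/4)) + 0"
    using h4 h3 by (intro add_mono) auto
  also have "\<dots> < 0" using h2 q by simp
  finally show ?thesis .
qed

lemma s3: fixes q d :: real assumes "q \<ge> 1" "d \<ge> 0" "2*q*d \<ge> 4+q+3*q^2"
  shows "45+54*q-6*d-36*d*q-6*d^2 < 0"
proof -
  have h2: "q^2 \<ge> q" using assms(1) by (simp add: power2_eq_square)
  have h3: "36*d*q \<ge> 18*(4+q+3*q^2)" using assms(3) by (simp add: algebra_simps)
  have "d^2 \<ge> 0" by simp
  then show ?thesis using h2 h3 assms
    using mult.assoc[of 36 d q] mult.commute[of q d] mult.assoc[of 2 q d] by linarith
qed

lemma s4: fixes q d :: real assumes "q \<ge> 1" "d \<ge> 0" "2*q*d \<ge> 4-q+q^2"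
  shows "66+35*q-49*q^2-19*d-70*d*q-9*d^2 < 0"
proof -
  have h2: "q^2 \<ge> q" using assms(1) by (simp add: power2_eq_square)
  have h3: "70*d*q \<ge> 35*(4-q+q^2)" using assms(3) by (simp add: algebra_simps)
  have "d^2 \<ge> 0" by simp
  then show ?thesis using h2 h3 assms
    using mult.assoc[of 70 d q] mult.commute[of q d] mult.assoc[of 2 q d] by linarith
qed

lemma G_neg:
  fixes s q d :: real
  assumes "s = 2 \<or> s = 3 \<or> s = 4 \<or> s \<ge> 5" "q = 1 \<or> q \<ge> 2" "d \<ge> 0"
    "2*q*(s+s*q+1+d) \<ge> 4+9*q+9*q^2"
  shows "G s q d < 0"
proof -
  have q1: "q \<ge> 1" using assms(2) by auto
  consider "s = 2" | "s = 3" | "s = 4" | "s \<ge> 5" using assms(1) by blast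
  then show ?thesis
  proof cases
    case 1
    have "2*q*d \<ge> 4+3*q+5*q^2" using assms(4) 1 by (simp add: algebra_simps power2_eq_square)
    then show ?thesis using 1 G2 s2[OF assms(2,3)] q1 by (simp add: mult_pos_neg)
  next
    case 2
    have "2*q*d \<ge> 4+q+3*q^2" using assms(4) 2 by (simp add: algebra_simps power2_eq_square)
    then show ?thesis using 2 G3 s3[OF q1 assms(3)] q1 by (simp add: mult_pos_neg)
  next
    case 3
    have "2*q*d \<ge> 4-q+q^2" using assms(4) 3 by (simp add: algebra_simps power2_eq_square)
    then show ?thesis using 3 G4 s4[OF q1 assms(3)] q1 by (simp add: mult_pos_neg)
  next
    case 4
    define a where "a = s - 5"
    define b where "b = q - 1"
    have a: "a \<ge> 0" and b: "b \<ge> 0" using 4 q1 unfolding a_def b_def by auto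
    have "s = a + 5" "q = b + 1" unfolding a_def b_def by auto
    then have "G s q d = - (b+1) * (45 + 264*b + 128*b^2 + 126*a + 249*a*b + 96*a*b^2
   + 31*a^2 + 51*a^2*b + 18*a^2*b^2 + 2*a^3 + 3*a^3*b + a^3*b^2 + 148*d + 112*d*b
   + 65*d*a + 46*d*a*b + 6*d*a^2 + 4*d*a^2*b + 12*d^2 + 3*d^2*a)" using G5 by simp
    moreover have "(45 + 264*b + 128*b^2 + 126*a + 249*a*b + 96*a*b^2
   + 31*a^2 + 51*a^2*b + 18*a^2*b^2 + 2*a^3 + 3*a^3*b + a^3*b^2 + 148*d + 112*d*b
   + 65*d*a + 46*d*a*b + 6*d*a^2 + 4*d*a^2*b + 12*d^2 + 3*d^2*a) > 0"
      using a b assms(3) by (intro add_pos_nonneg; simp)+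
    moreover have "- (b+1) < 0" using b by simp
    ultimately show ?thesis by (metis mult_neg_pos)
  qed
qed


lemma fx_G:
  assumes "real m = d + 1" "real k = real s * q" "X = real s + real s * q + 1 + d + 3 * q"
  shows "fx s m k X = G (real s) q d"
  unfolding fx_def G_def Let_def assms by (simp add: algebra_simps)

theorem mainTheorem7:
  fixes t :: real and n s :: nat
  assumes "t > 0"
    and "1 / t \<in> \<nat>"
    and "real n \<ge> 2 * t + 9 / (2 * t) + 9 / 2"
    and "s \<ge> 2"
    and "real s / t \<in> \<int>"
    and "real n \<ge> real s + real s / t + 1"
  shows "lambda1 (D_join 1 (nat \<lfloor>real n - 1 - 1 / t\<rfloor>) (nat \<lfloor>1 / t\<rfloor>))
       < lambda1 (D_join s (nat \<lfloor>real n - real s - real s / t\<rfloor>) (nat \<lfloor>real s / t\<rfloor>))"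
proof -
  obtain q :: nat where q: "1 / t = real q" using assms(2) by (auto elim: Nats_cases)
  have "real q > 0" unfolding q[symmetric] using assms(1) by simp
  then have q1: "q \<ge> 1" by simp
  have tq: "t = 1 / real q" unfolding q[symmetric] by simp
  have st: "real s / t = real (s * q)" using q by (simp add: divide_inverse tq)
  have hn: "real n \<ge> 2 / real q + 9 * real q / 2 + 9 / 2" using assms(3) tq by simp
  have hn2: "2 * real q * real n \<ge> 4 + 9 * real q + 9 * (real q)^2"
  proof -
    have "2 * real q * real n \<ge> 2 * real q * (2 / real q + 9 * real q / 2 + 9 / 2)"
      using hn q1 by (intro mult_left_mono) auto
    also have "2 * real q * (2 / real q + 9 * real q / 2 + 9 / 2) = 4 + 9 * real q + 9 * (real q)^2"
      using q1 by (simp add: field_simps power2_eq_square)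
    finally show ?thesis .
  qed
  have ns: "n \<ge> s + s * q + 1" using assms(6) st by (simp flip: of_nat_add of_nat_mult)
  have nq: "n \<ge> q + 4"
  proof (rule ccontr)
    assume "\<not> ?thesis"
    then have "real n < real q + 4" by simp
    then have "2 * real q * real n < 2 * real q * (real q + 4)" using q1 by simp
    moreover have "2 * real q * (real q + 4) \<le> 9 * real q + 9 * (real q)^2"
      using q1 by (simp add: algebra_simps power2_eq_square)
    ultimately show False using hn2 by linarith
  qed
  define m1 where "m1 = n - 1 - q"
  define m2 where "m2 = n - s - s * q"
  define k2 where "k2 = s * q"
  have e1: "real n - 1 - 1 / t = real (n - 1 - q)" using nq unfolding q by (simp add: of_nat_diff)
  have f1: "nat \<lfloor>real n - 1 - 1 / t\<rfloor> = m1" unfolding e1 m1_def by (simp only: floor_of_nat nat_int)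
  have f2: "nat \<lfloor>1 / t\<rfloor> = q" using q by simp
  have e3: "real n - real s - real s / t = real (n - s - s * q)" using ns unfolding st by (simp add: of_nat_diff)
  have f3: "nat \<lfloor>real n - real s - real s / t\<rfloor> = m2" unfolding e3 m2_def by (simp only: floor_of_nat nat_int)
  have f4: "nat \<lfloor>real s / t\<rfloor> = k2" unfolding st k2_def by (simp only: floor_of_nat nat_int)
  have m1r: "real m1 = real n - 1 - real q" using nq unfolding m1_def by (simp add: of_nat_diff)
  have m2r: "real m2 = real n - real s - real s * real q" using ns unfolding m2_def by (simp add: of_nat_diff)
  have m1_2: "m1 \<ge> 2" using nq unfolding m1_def by simp
  have m2_1: "m2 \<ge> 1" using ns unfolding m2_def by simp
  have k2_1: "k2 \<ge> 1" using q1 assms(4) unfolding k2_def by simp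
  have N1: "1 + m1 + q = n" using nq unfolding m1_def by simp
  define X where "X = real n + 3 * real q"
  define U where "U = X - 1"
  have fx1: "fx 1 m1 q X \<ge> 0"
  proof -
    have "fx 1 m1 q X = real q * ((real n + 3 * real q) * (8 * real q + 7) + real n - 1 - real q)"
      unfolding fx_def X_def m1r by (simp add: algebra_simps)
    moreover have "real q * ((real n + 3 * real q) * (8 * real q + 7) + real n - 1 - real q) \<ge> 0"
    proof (rule mult_nonneg_nonneg)
      have "(real n + 3 * real q) * (8 * real q + 7) \<ge> 0" by simp
      moreover have "real n \<ge> 1 + real q" using nq by simp
      ultimately show "(real n + 3 * real q) * (8 * real q + 7) + real n - 1 - real q \<ge> 0" by linarith
    qed simp
    ultimately show ?thesis by simp
  qed
  have "\<exists>x0. eigenvalue (D_join 1 m1 q) x0"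
  proof -
    have "fx 1 m1 q (- real m1) \<le> 0"
    proof -
      have "fx 1 m1 q (- real m1) = - real m1 * (1 + 2 * real m1) * (real m1 - 1)"
        unfolding fx_def by (simp add: algebra_simps)
      moreover have "real m1 * (1 + 2 * real m1) * (real m1 - 1) \<ge> 0" using m1_2 by simp
      ultimately show ?thesis by linarith
    qed
    moreover have "fx 1 m1 q 0 \<ge> 0" unfolding fx_def by simp
    ultimately obtain x0 where "fx 1 m1 q x0 = 0" using root_ivt[of 1 m1 q "- real m1" 0] by auto
    then have r0: "fx 1 m1 q ((x0 - 1) + 1) = 0" by simp
    have "eigenvalue (D_join 1 m1 q) (x0 - 1)"
      by (rule eig_from_root[OF _ _ _ r0]) (use q1 m1_2 in auto)
    then show ?thesis by blast
  qed
  then obtain y1 where y1: "eigenvalue (D_join 1 m1 q) y1" by blast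
  have C1: "D_join 1 m1 q \<in> carrier_mat (1+m1+q) (1+m1+q)" by (rule D_join_carrier) simp
  have L1: "lambda1 (D_join 1 m1 q) \<le> U"
  proof (rule lambda1_le[OF C1 y1])
    fix x assume ev: "eigenvalue (D_join 1 m1 q) x"
    define a where "a = real q * (U + 1 + real m1)"
    define b where "b = real q * (2 * (U + 1) - real 1)"
    define c where "c = (U + 1) * (U + 1 - real 1 - real m1)"
    have Xm: "X - 1 - real m1 = 4 * real q" unfolding X_def m1r by simp
    have pos: "a > 0" "b > 0" "c > 0" unfolding a_def b_def c_def U_def using q1 Xm nq
      by (auto simp: X_def intro!: mult_pos_pos)
    show "x \<le> U"
    proof (rule collatz[OF C1 _ _ _ _ ev])
      show "vec (1+m1+q) (cv 1 m1 a b c) \<in> carrier_vec (1+m1+q)" by simp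
      show "\<And>i. i < 1+m1+q \<Longrightarrow> vec (1+m1+q) (cv 1 m1 a b c) $ i > 0"
        using pos by (simp add: cv_def)
      show "\<And>i. i < 1+m1+q \<Longrightarrow> (D_join 1 m1 q *\<^sub>v vec (1+m1+q) (cv 1 m1 a b c)) $ i
          \<le> U * vec (1+m1+q) (cv 1 m1 a b c) $ i"
      proof -
        fix i assume i: "i < 1+m1+q"
        have "(D_join 1 m1 q *\<^sub>v vec (1+m1+q) (cv 1 m1 a b c)) $ i = rowv 1 m1 q a b c i"
          by (rule D_mult) (use i in auto)
        also have "\<dots> = U * cv 1 m1 a b c i - (if i < 1 + m1 then 0 else fx 1 m1 q (U + 1))"
          by (rule rowv_gen) (auto simp: a_def b_def c_def)
        also have "\<dots> \<le> U * cv 1 m1 a b c i" using fx1 unfolding U_def by simp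
        finally show "(D_join 1 m1 q *\<^sub>v vec (1+m1+q) (cv 1 m1 a b c)) $ i
          \<le> U * vec (1+m1+q) (cv 1 m1 a b c) $ i" using i by simp
      qed
    qed (use D_join_nonneg in auto)
  qed
  have fx2: "fx s m2 k2 X < 0"
  proof -
    define d where "d = real n - real s - real s * real q - 1"
    have d0: "d \<ge> 0" using ns unfolding d_def by (simp flip: of_nat_add of_nat_mult)
    have "fx s m2 k2 X = G (real s) (real q) d"
      by (rule fx_G) (auto simp: m2r d_def k2_def X_def)
    moreover have "G (real s) (real q) d < 0"
    proof (rule G_neg)
      show "real s = 2 \<or> real s = 3 \<or> real s = 4 \<or> real s \<ge> 5" using assms(4) by auto
      show "real q = 1 \<or> real q \<ge> 2" using q1 by auto
      show "d \<ge> 0" by (rule d0)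
      show "2 * real q * (real s + real s * real q + 1 + d) \<ge> 4 + 9 * real q + 9 * (real q)^2"
        using hn2 unfolding d_def by simp
    qed
    ultimately show ?thesis by simp
  qed
  define Y where "Y = 8 * (real s + real m2 + real k2) + 8"
  have fY: "fx s m2 k2 Y > 0" by (rule fx_large) (simp add: Y_def)
  have XY: "X \<le> Y" unfolding X_def Y_def using m2r nq by (simp add: k2_def)
  obtain x2 where x2: "x2 \<ge> X" "x2 \<le> Y" "fx s m2 k2 x2 = 0"
    using root_ivt[of s m2 k2 X Y] fx2 fY XY by auto
  have "x2 \<noteq> X" using x2(3) fx2 by auto
  with x2 have x2X: "x2 > X" by simp
  have E2: "eigenvalue (D_join s m2 k2) (x2 - 1)"
    by (rule eig_from_root) (use assms(4) k2_1 m2_1 x2(3) in auto)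
  have C2: "D_join s m2 k2 \<in> carrier_mat (s+m2+k2) (s+m2+k2)" by (rule D_join_carrier) (use assms(4) in auto)
  have L2: "x2 - 1 \<le> lambda1 (D_join s m2 k2)" by (rule lambda1_ge[OF C2 E2])
  show ?thesis unfolding f1 f2 f3 f4 using L1 L2 x2X unfolding U_def by linarith
qed


end
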